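(* Let $x_1,\dots,x_n\in\mathbb{R}^d$ and $y_1,\dots,y_n\in\{0,1\}$, let $R>0$ satisfy $\|x_i\|_2\le R$ for all $i$, let $\ell(\beta)=\sum_{i=1}^n\{y_ix_i^T\beta-\log(1+e^{x_i^T\beta})\}$ and let $\hat\beta$ be a maximizer of $\ell$. Let $L\ge1$ be an integer, $z_1,\dots,z_L\in\mathbb{R}$, $F_L(a)=L^{-1}\sum_{l=1}^L1\{a\ge z_l\}$, and $\nabla\tilde\ell(\beta)=\sum_{i=1}^n\{x_iy_i-x_iF_L(x_i^T\beta)\}$. Suppose $\beta\in\mathbb{R}^d$ satisfies $\|\nabla\tilde\ell(\beta)\|_2\le nRL^{-1}$. Let $\hat\lambda_{\min}$ be the smallest eigenvalue of the Fisher information matrix $I(\cdot)=-n^{-1}\nabla^2\ell(\cdot)$ over the line segment between $\beta$ and $\hat\beta$, i.e. $\hat\lambda_{\min}=\inf_{a\in[0,1]}\lambda_{\min}\bigl(I(a\beta+(1-a)\hat\beta)\bigr)$, and suppose $\hat\lambda_{\min}>0$. Then $$\|\beta-\hat\beta\|_2\le\frac{R\bigl(L^{-1}+\sup_{a\in\mathbb{R}}|F_L(a)-\sigma(a)|\bigr)}{\hat\lambda_{\min}},$$ where $\sigma(a)=(1+e^{-a})^{-1}$.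
   Context: $\nabla^2\ell(\beta)=-\sum_i\sigma(x_i^T\beta)(1-\sigma(x_i^T\beta))x_ix_i^T$ is the Hessian of the logistic log-likelihood $\ell$. $\nabla\tilde\ell$ is the approximate gradient in which the logistic function $\sigma$ is replaced by the empirical CDF $F_L$ of the points $z_1,\dots,z_L$ (in the paper, independent logistic draws). For a symmetric matrix $B$, $\lambda_{\min}(B)$ is its smallest eigenvalue. *)

theory Defs
  imports "HOL-Analysis.Analysis"
begin

definition sigma :: "real \<Rightarrow> real" where
  "sigma a = 1 / (1 + exp (- a))"

definition loglik :: "nat \<Rightarrow> (nat \<Rightarrow> real^'d) \<Rightarrow> (nat \<Rightarrow> real) \<Rightarrow> real^'d \<Rightarrow> real" where
  "loglik n x y b = (\<Sum>i<n. y i * (x i \<bullet> b) - ln (1 + exp (x i \<bullet> b)))"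

definition FL :: "nat \<Rightarrow> (nat \<Rightarrow> real) \<Rightarrow> real \<Rightarrow> real" where
  "FL L z a = (\<Sum>l\<in>{1..L}. (if a \<ge> z l then 1 else 0)) / real L"

definition approx_grad :: "nat \<Rightarrow> (nat \<Rightarrow> real^'d) \<Rightarrow> (nat \<Rightarrow> real) \<Rightarrow> nat \<Rightarrow> (nat \<Rightarrow> real) \<Rightarrow> real^'d \<Rightarrow> real^'d" where
  "approx_grad n x y L z b = (\<Sum>i<n. y i *\<^sub>R x i - FL L z (x i \<bullet> b) *\<^sub>R x i)"

definition outer :: "real^'d \<Rightarrow> real^'d \<Rightarrow> real^'d^'d" where
  "outer u v = (\<chi> i j. u $ i * v $ j)"

definition hessian_loglik :: "nat \<Rightarrow> (nat \<Rightarrow> real^'d) \<Rightarrow> real^'d \<Rightarrow> real^'d^'d" where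
  "hessian_loglik n x b = - (\<Sum>i<n. (sigma (x i \<bullet> b) * (1 - sigma (x i \<bullet> b))) *\<^sub>R outer (x i) (x i))"

definition fisher_info :: "nat \<Rightarrow> (nat \<Rightarrow> real^'d) \<Rightarrow> real^'d \<Rightarrow> real^'d^'d" where
  "fisher_info n x b = - (1 / real n) *\<^sub>R hessian_loglik n x b"

definition lambda_min :: "real^'d^'d \<Rightarrow> real" where
  "lambda_min B = Inf {c. \<exists>v. v \<noteq> 0 \<and> B *v v = c *\<^sub>R v}"

end

theory Submission
  imports Defs
begin

lemma sym_inner:
  fixes B :: "real^'d^'d"
  assumes sym: "transpose B = B"
  shows "u \<bullet> (B *v r) = r \<bullet> (B *v u)"
proof -
  have "u \<bullet> (B *v r) = (u v* B) \<bullet> r" by (simp add: dot_lmul_matrix)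
  also have "u v* B = transpose B *v u" by simp
  finally show ?thesis using sym by (simp add: inner_commute)
qed

lemma quad_ineq:
  fixes a K :: real
  assumes "\<forall>t. 2*t*a + t^2*K \<ge> 0" "a \<ge> 0"
  shows "a = 0"
proof (rule ccontr)
  assume "a \<noteq> 0" hence a: "a > 0" using assms by simp
  show False
  proof (cases "K \<le> 0")
    case True
    have "2*(-1)*a + (-1)^2*K \<ge> 0" using assms(1) by blast
    thus False using a True by simp
  next
    case False
    have "2*(-a/K)*a + (-a/K)^2*K \<ge> 0" using assms(1) by blast
    moreover have "2*(-a/K)*a + (-a/K)^2*K = - (a^2/K)" using False by (simp add: field_simps power2_eq_square)
    moreover have "a^2/K > 0" using a False by simp
    ultimately show False by linarith
  qed
qed

lemma rayleigh:
  fixes B :: "real^'d^'d"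
  assumes sym: "transpose B = B"
  shows "\<exists>u m. u \<noteq> 0 \<and> B *v u = m *\<^sub>R u \<and> (\<forall>v. v \<bullet> (B *v v) \<ge> m * (norm v)^2)"
proof -
  define q where "q = (\<lambda>v::real^'d. v \<bullet> (B *v v))"
  have cont: "continuous_on (sphere 0 1) q"
    unfolding q_def by (intro continuous_intros linear_continuous_on) (auto intro: linear_linear)
  have ne: "sphere (0::real^'d) 1 \<noteq> {}"
    using norm_axis_1[where 'a='d] by (metis mem_sphere_0 empty_iff)
  obtain u where u: "u \<in> sphere 0 1" and umin: "\<forall>v\<in>sphere 0 1. q u \<le> q v"
    using continuous_attains_inf[OF compact_sphere ne cont] by blast
  define m where "m = q u"
  have nu: "norm u = 1" using u by simp
  have qscale: "q (c *\<^sub>R v) = c^2 * q v" for c v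
    unfolding q_def by (simp add: matrix_vector_mult_scaleR power2_eq_square)
  have gen: "q v \<ge> m * (norm v)^2" for v
  proof (cases "v = 0")
    case True thus ?thesis by (simp add: q_def)
  next
    case False
    define w where "w = (1/norm v) *\<^sub>R v"
    have "w \<in> sphere 0 1" using False by (simp add: w_def)
    hence "m \<le> q w" using umin m_def by blast
    moreover have "v = norm v *\<^sub>R w" using False by (simp add: w_def)
    hence "q v = (norm v)^2 * q w" using qscale by metis
    ultimately show ?thesis by (metis mult.commute mult_right_mono zero_le_power2)
  qed
  define r where "r = B *v u - m *\<^sub>R u"
  have Bu: "B *v u = r + m *\<^sub>R u" by (simp add: r_def)
  have "\<forall>t. 2*t*(r \<bullet> r) + t^2*(q r - m * (r \<bullet> r)) \<ge> 0"
  proof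
    fix t
    have g: "q (u + t *\<^sub>R r) \<ge> m * (norm (u + t *\<^sub>R r))^2" by (rule gen)
    have e1: "q (u + t *\<^sub>R r) = q u + t * (u \<bullet> (B *v r)) + t * (r \<bullet> (B *v u)) + t^2 * q r"
      unfolding q_def by (simp add: matrix_vector_right_distrib matrix_vector_mult_scaleR inner_add_left inner_add_right power2_eq_square algebra_simps)
    have e2: "(norm (u + t *\<^sub>R r))^2 = 1 + 2*t*(u \<bullet> r) + t^2 * (r \<bullet> r)"
    proof -
      have uu: "u \<bullet> u = 1" using nu by (metis power2_norm_eq_inner power_one)
      show ?thesis unfolding power2_norm_eq_inner
        by (simp add: inner_add_left inner_add_right uu power2_eq_square algebra_simps inner_commute)
    qed
    have e3: "u \<bullet> (B *v r) = r \<bullet> (B *v u)" by (rule sym_inner[OF sym])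
    have e4: "r \<bullet> (B *v u) = r \<bullet> r + m * (u \<bullet> r)" by (simp add: Bu inner_add_right inner_commute)
    show "2*t*(r \<bullet> r) + t^2*(q r - m * (r \<bullet> r)) \<ge> 0"
      using g e1 e2 e3 e4 unfolding m_def[symmetric] by (simp add: algebra_simps)
  qed
  hence "r \<bullet> r = 0" by (rule quad_ineq) simp
  hence "r = 0" by simp
  hence "B *v u = m *\<^sub>R u" by (simp add: r_def)
  moreover have "u \<noteq> 0" using nu by auto
  ultimately show ?thesis using gen unfolding q_def by blast
qed


lemma lambda_min_eq:
  fixes B :: "real^'d^'d"
  assumes sym: "transpose B = B"
  shows "\<exists>u m. u \<noteq> 0 \<and> B *v u = m *\<^sub>R u \<and> lambda_min B = m \<and> (\<forall>v. v \<bullet> (B *v v) \<ge> m * (norm v)^2)"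
proof -
  obtain u m where u: "u \<noteq> 0" "B *v u = m *\<^sub>R u" and g: "\<forall>v. v \<bullet> (B *v v) \<ge> m * (norm v)^2"
    using rayleigh[OF sym] by blast
  define E where "E = {c. \<exists>v. v \<noteq> 0 \<and> B *v v = c *\<^sub>R v}"
  have mE: "m \<in> E" unfolding E_def using u by blast
  have ev: "v \<bullet> (B *v v) = c * (norm v)^2" if "B *v v = c *\<^sub>R v" for v c
  proof -
    have "v \<bullet> (B *v v) = c * (v \<bullet> v)" using that by simp
    also have "v \<bullet> v = (norm v)^2" by (rule power2_norm_eq_inner[symmetric])
    finally show ?thesis .
  qed
  have lb: "m \<le> c" if "c \<in> E" for c
  proof -
    from that obtain v where v: "v \<noteq> 0" "B *v v = c *\<^sub>R v" unfolding E_def by blast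
    have "m * (norm v)^2 \<le> c * (norm v)^2" using spec[OF g, of v] ev[OF v(2)] by linarith
    moreover have "(norm v)^2 > 0" using v by simp
    ultimately show ?thesis by simp
  qed
  have bdd: "bdd_below E" by (rule bdd_belowI[where m=m]) (rule lb)
  have "Inf E \<le> m" by (rule cInf_lower[OF mE bdd])
  moreover have "m \<le> Inf E" by (rule cInf_greatest, use mE in blast, rule lb)
  ultimately have "lambda_min B = m" unfolding lambda_min_def E_def[symmetric] by linarith
  thus ?thesis using u g by blast
qed

lemma lambda_min_props:
  fixes B :: "real^'d^'d"
  assumes sym: "transpose B = B"
  shows "\<forall>v. v \<bullet> (B *v v) \<ge> lambda_min B * (norm v)^2"
    and "(\<forall>v. v \<bullet> (B *v v) \<ge> 0) \<Longrightarrow> lambda_min B \<ge> 0"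
proof -
  obtain u m where u: "u \<noteq> 0" "B *v u = m *\<^sub>R u" and lm: "lambda_min B = m"
    and g: "\<forall>v. v \<bullet> (B *v v) \<ge> m * (norm v)^2"
    using lambda_min_eq[OF sym] by blast
  show "\<forall>v. v \<bullet> (B *v v) \<ge> lambda_min B * (norm v)^2" using g lm by simp
  show "lambda_min B \<ge> 0" if psd: "\<forall>v. v \<bullet> (B *v v) \<ge> 0"
  proof -
    have "u \<bullet> (B *v u) = m * (u \<bullet> u)" using u by simp
    hence "m * (u \<bullet> u) \<ge> 0" using spec[OF psd, of u] by simp
    moreover have "u \<bullet> u > 0" using u by simp
    ultimately have "m \<ge> 0" by (simp add: zero_le_mult_iff)
    thus ?thesis using lm by simp
  qed
qed

lemma outer_mult: "outer u u *v d = (u \<bullet> d) *\<^sub>R (u::real^'d)"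
  unfolding vec_eq_iff outer_def matrix_vector_mult_def inner_vec_def
  by (simp add: sum_distrib_left mult_ac)
lemma fisher_sym: "transpose (fisher_info n x b) = fisher_info n x b"
  unfolding vec_eq_iff transpose_def fisher_info_def hessian_loglik_def outer_def
  by (simp add: mult.commute)
lemma sigma_deriv: "(sigma has_real_derivative sigma s * (1 - sigma s)) (at s)"
proof -
  have hp: "1 + exp (- s) \<noteq> 0" by (smt (verit) exp_gt_zero)
  have "((\<lambda>s. 1 / (1 + exp (- s))) has_real_derivative exp (-s) / (1 + exp (- s))^2) (at s)"
    apply (rule derivative_eq_intros | rule refl)+
    using hp apply (simp_all add: power2_eq_square)
    done
  moreover have "exp (-s) / (1 + exp (- s))^2 = sigma s * (1 - sigma s)"
    unfolding sigma_def using hp by (simp add: field_simps power2_eq_square)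
  ultimately show ?thesis unfolding sigma_def by simp
qed
lemma lnexp_deriv: "((\<lambda>s. ln (1 + exp s)) has_real_derivative sigma s) (at s)"
proof -
  have "((\<lambda>s. ln (1 + exp s)) has_real_derivative exp s / (1 + exp s)) (at s)"
    by (auto intro!: derivative_eq_intros simp: add_pos_pos)
  moreover have "exp s / (1 + exp s) = sigma s"
    unfolding sigma_def by (simp add: field_simps exp_minus add_pos_pos)
  ultimately show ?thesis by simp
qed

lemma mv_add: "(A + B) *v v = A *v v + B *v (v::real^'d)"
  by (simp add: vec_eq_iff matrix_vector_mult_def sum.distrib algebra_simps)
lemma mv_scale: "(c *\<^sub>R A) *v v = c *\<^sub>R (A *v (v::real^'d))"
  by (simp add: vec_eq_iff matrix_vector_mult_def sum_distrib_left algebra_simps)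
lemma mv_neg: "(- A) *v v = - (A *v (v::real^'d))"
  by (simp add: vec_eq_iff matrix_vector_mult_def sum_negf)
lemma mv_sum: "finite S \<Longrightarrow> (sum f S) *v v = (\<Sum>i\<in>S. f i *v (v::real^'d))"
  by (induction S rule: finite_induct) (auto simp: mv_add)

lemma fisher_quad:
  "d \<bullet> (fisher_info n x b *v d) = (1 / real n) * (\<Sum>i<n. sigma (x i \<bullet> b) * (1 - sigma (x i \<bullet> b)) * (x i \<bullet> d)^2)"
  unfolding fisher_info_def hessian_loglik_def
  by (simp add: mv_scale mv_neg mv_sum outer_mult inner_sum_right power2_eq_square algebra_simps inner_commute)

lemma sigma_bounds: "0 < sigma s" "sigma s < 1"
  unfolding sigma_def by (auto simp: add_pos_pos)

lemma sigma_chain[derivative_intros]: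
  "(f has_real_derivative f') (at t within S) \<Longrightarrow>
   ((\<lambda>t. sigma (f t)) has_real_derivative sigma (f t) * (1 - sigma (f t)) * f') (at t within S)"
  using DERIV_chain'[OF _ sigma_deriv] by (simp add: mult.commute)

lemma lnexp_chain[derivative_intros]:
  "(f has_real_derivative f') (at t within S) \<Longrightarrow>
   ((\<lambda>t. ln (1 + exp (f t))) has_real_derivative sigma (f t) * f') (at t within S)"
  using DERIV_chain'[OF _ lnexp_deriv] by (simp add: mult.commute)

lemma fisher_psd: "d \<bullet> (fisher_info n x b *v d) \<ge> 0"
  unfolding fisher_quad using sigma_bounds
  by (intro mult_nonneg_nonneg sum_nonneg) (auto simp: less_imp_le)

lemma FL_bounds: "L \<ge> 1 \<Longrightarrow> 0 \<le> FL L z a \<and> FL L z a \<le> 1"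
proof -
  assume L: "L \<ge> 1"
  have "(\<Sum>l\<in>{1..L}. (if a \<ge> z l then 1 else 0::real)) \<le> (\<Sum>l\<in>{1..L}. 1)"
    by (rule sum_mono) auto
  hence "(\<Sum>l\<in>{1..L}. (if a \<ge> z l then 1 else 0::real)) \<le> real L" by simp
  moreover have "(\<Sum>l\<in>{1..L}. (if a \<ge> z l then 1 else 0::real)) \<ge> 0" by (rule sum_nonneg) auto
  ultimately show ?thesis using L unfolding FL_def by auto
qed

lemma lambda_min_zero: "lambda_min (0::real^'d^'d) = 0"
proof -
  have "{c. \<exists>v. v \<noteq> 0 \<and> (0::real^'d^'d) *v v = c *\<^sub>R v} = {0}"
  proof
    show "{0} \<subseteq> {c. \<exists>v. v \<noteq> 0 \<and> (0::real^'d^'d) *v v = c *\<^sub>R v}"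
      by (auto intro!: exI[of _ "axis undefined (1::real)"])
  qed auto
  thus ?thesis by (simp add: lambda_min_def)
qed


lemma lin_deriv: "((\<lambda>t. a + t*c) has_real_derivative c) (at t)"
  by (auto intro!: derivative_eq_intros)

lemma term_deriv: "((\<lambda>t. yy * (a + t*c) - ln (1 + exp (a + t*c))) has_real_derivative (yy - sigma (a + t*c)) * c) (at t)"
proof -
  have "((\<lambda>t. yy * (a + t*c) - ln (1 + exp (a + t*c))) has_real_derivative yy * c - sigma (a + t*c) * c) (at t)"
    by (rule DERIV_diff[OF DERIV_cmult[OF lin_deriv] lnexp_chain[OF lin_deriv]])
  thus ?thesis by (simp add: algebra_simps)
qed

lemma term_deriv2: "((\<lambda>t. (yy - sigma (a + t*c)) * c) has_real_derivative - (sigma (a + t*c) * (1 - sigma (a + t*c)) * c^2)) (at t)"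
proof -
  have "((\<lambda>t. (yy - sigma (a + t*c)) * c) has_real_derivative (0 - sigma (a + t*c) * (1 - sigma (a + t*c)) * c) * c) (at t)"
    by (rule DERIV_cmult_right[OF DERIV_diff[OF DERIV_const sigma_chain[OF lin_deriv]]])
  thus ?thesis by (simp add: algebra_simps power2_eq_square)
qed

theorem lemma3:
  fixes n L :: nat and x :: "nat \<Rightarrow> real^'d" and y z :: "nat \<Rightarrow> real"
    and R :: real and beta betahat :: "real^'d"
  assumes y01: "\<forall>i<n. y i \<in> {0, 1}"
    and Rpos: "R > 0"
    and xbound: "\<forall>i<n. norm (x i) \<le> R"
    and maxim: "\<forall>b. loglik n x y b \<le> loglik n x y betahat"
    and L1: "L \<ge> 1"
    and grad: "norm (approx_grad n x y L z beta) \<le> real n * R / real L"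
    and lampos: "(INF a\<in>{0..1}. lambda_min (fisher_info n x (a *\<^sub>R beta + (1 - a) *\<^sub>R betahat))) > 0"
  shows "norm (beta - betahat) \<le>
    R * (1 / real L + (SUP a. \<bar>FL L z a - sigma a\<bar>))
      / (INF a\<in>{0..1}. lambda_min (fisher_info n x (a *\<^sub>R beta + (1 - a) *\<^sub>R betahat)))"
proof -
  define Lam where "Lam = (INF a\<in>{0..1}. lambda_min (fisher_info n x (a *\<^sub>R beta + (1 - a) *\<^sub>R betahat)))"
  define S where "S = (SUP a. \<bar>FL L z a - sigma a\<bar>)"
  have Lpos: "Lam > 0" using lampos Lam_def by simp
  define g where "g b = (\<Sum>i<n. (y i - sigma (x i \<bullet> b)) *\<^sub>R x i)" for b
  have ginner: "g b \<bullet> w = (\<Sum>i<n. (y i - sigma (x i \<bullet> b)) * (x i \<bullet> w))" for b w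
    unfolding g_def by (simp add: inner_sum_left)
  have npos: "n > 0"
  proof (rule ccontr)
    assume "\<not> n > 0" hence n0: "n = 0" by simp
    have "fisher_info n x b = 0" for b using n0 by (simp add: fisher_info_def)
    hence "Lam = 0" by (simp add: Lam_def lambda_min_zero)
    thus False using Lpos by simp
  qed
  have g0: "g betahat = 0"
  proof -
    define w where "w = g betahat"
    define phi where "phi t = loglik n x y (betahat + t *\<^sub>R w)" for t
    have phi_eq: "phi = (\<lambda>t. \<Sum>i<n. y i * (x i \<bullet> betahat + t * (x i \<bullet> w)) - ln (1 + exp (x i \<bullet> betahat + t * (x i \<bullet> w))))"
      by (simp add: phi_def loglik_def inner_add_right fun_eq_iff)
    have "(phi has_real_derivative (\<Sum>i<n. (y i - sigma (x i \<bullet> betahat)) * (x i \<bullet> w))) (at 0)"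
    proof -
      have "(phi has_real_derivative (\<Sum>i<n. (y i - sigma (x i \<bullet> betahat + 0 * (x i \<bullet> w))) * (x i \<bullet> w))) (at 0)"
        unfolding phi_eq by (rule DERIV_sum) (rule term_deriv)
      thus ?thesis by simp
    qed
    moreover have "\<forall>t. \<bar>0 - t\<bar> < 1 \<longrightarrow> phi t \<le> phi 0"
      using maxim by (simp add: phi_def)
    ultimately have "(\<Sum>i<n. (y i - sigma (x i \<bullet> betahat)) * (x i \<bullet> w)) = 0"
      by (rule DERIV_local_max[OF _ zero_less_one])
    hence "w \<bullet> w = 0" using ginner w_def by simp
    thus ?thesis using w_def by simp
  qed
  define d where "d = beta - betahat"
  have pt_eq: "x i \<bullet> (a *\<^sub>R beta + (1 - a) *\<^sub>R betahat) = x i \<bullet> betahat + a * (x i \<bullet> d)" for i a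
    by (simp add: d_def inner_add_right inner_diff_right algebra_simps)
  define h where "h a = (\<Sum>i<n. (y i - sigma (x i \<bullet> betahat + a * (x i \<bullet> d))) * (x i \<bullet> d))" for a
  define h' where "h' a = (\<Sum>i<n. - (sigma (x i \<bullet> betahat + a * (x i \<bullet> d)) * (1 - sigma (x i \<bullet> betahat + a * (x i \<bullet> d))) * (x i \<bullet> d)^2))" for a
  have hder: "(h has_real_derivative h' a) (at a)" for a
    unfolding h_def h'_def by (rule DERIV_sum) (rule term_deriv2)
  obtain xi where xi: "0 < xi" "xi < 1" "h 1 - h 0 = (1 - 0) * h' xi"
    using MVT2[OF zero_less_one hder] by blast
  have h0: "h 0 = 0" using g0 ginner[of betahat d] by (simp add: h_def)
  have h1: "h 1 = g beta \<bullet> d"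
    using ginner[of beta d] by (simp add: h_def d_def inner_diff_right)
  define P where "P = xi *\<^sub>R beta + (1 - xi) *\<^sub>R betahat"
  have h'eq: "h' xi = - real n * (d \<bullet> (fisher_info n x P *v d))"
    unfolding fisher_quad P_def pt_eq h'_def using npos by (simp add: sum_negf)
  have bdd: "bdd_below ((\<lambda>a. lambda_min (fisher_info n x (a *\<^sub>R beta + (1 - a) *\<^sub>R betahat))) ` {0..1})"
    by (rule bdd_belowI2[where m=0]) (rule lambda_min_props(2)[OF fisher_sym], simp add: fisher_psd)
  have "Lam \<le> lambda_min (fisher_info n x P)"
    unfolding Lam_def P_def by (rule cINF_lower[OF bdd]) (use xi in auto)
  hence "Lam * (norm d)^2 \<le> lambda_min (fisher_info n x P) * (norm d)^2"
    by (simp add: mult_right_mono)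
  also have "\<dots> \<le> d \<bullet> (fisher_info n x P *v d)"
    using lambda_min_props(1)[OF fisher_sym] by blast
  finally have q: "Lam * (norm d)^2 \<le> d \<bullet> (fisher_info n x P *v d)" .
  have gd: "g beta \<bullet> d = - real n * (d \<bullet> (fisher_info n x P *v d))"
    using xi(3) h0 h1 h'eq by simp
  have "real n * Lam * (norm d)^2 \<le> - (g beta \<bullet> d)"
    using q gd npos by (simp add: mult.assoc mult_left_mono)
  also have "\<dots> \<le> norm (g beta) * norm d"
    using Cauchy_Schwarz_ineq2[of "g beta" d] by linarith
  finally have key: "real n * Lam * (norm d)^2 \<le> norm (g beta) * norm d" .
  have bddS: "bdd_above (range (\<lambda>a. \<bar>FL L z a - sigma a\<bar>))"
  proof (rule bdd_aboveI2[where M=1])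
    fix a
    show "\<bar>FL L z a - sigma a\<bar> \<le> 1" using FL_bounds[OF L1, of z a] sigma_bounds[of a] by auto
  qed
  have Sge: "\<bar>FL L z a - sigma a\<bar> \<le> S" for a
    unfolding S_def by (rule cSUP_upper[OF _ bddS]) simp
  have S0: "S \<ge> 0" using Sge[of 0] by linarith
  have gsplit: "g beta = approx_grad n x y L z beta + (\<Sum>i<n. (FL L z (x i \<bullet> beta) - sigma (x i \<bullet> beta)) *\<^sub>R x i)"
    unfolding g_def approx_grad_def
    by (subst sum.distrib[symmetric]) (rule sum.cong, auto simp: scaleR_diff_left)
  have "norm (\<Sum>i<n. (FL L z (x i \<bullet> beta) - sigma (x i \<bullet> beta)) *\<^sub>R x i)
        \<le> (\<Sum>i<n. \<bar>FL L z (x i \<bullet> beta) - sigma (x i \<bullet> beta)\<bar> * norm (x i))"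
    by (rule order_trans[OF norm_sum]) simp
  also have "\<dots> \<le> (\<Sum>i<n. S * R)"
    by (rule sum_mono, rule mult_mono) (use Sge xbound S0 in auto)
  finally have "norm (\<Sum>i<n. (FL L z (x i \<bullet> beta) - sigma (x i \<bullet> beta)) *\<^sub>R x i) \<le> real n * S * R" by simp
  hence gb: "norm (g beta) \<le> real n * R / real L + real n * S * R"
    unfolding gsplit using grad norm_triangle_ineq[of "approx_grad n x y L z beta" "\<Sum>i<n. (FL L z (x i \<bullet> beta) - sigma (x i \<bullet> beta)) *\<^sub>R x i"] by linarith
  have rhs0: "R * (1 / real L + S) / Lam \<ge> 0" using Rpos S0 Lpos by simp
  show ?thesis
  proof (cases "d = 0")
    case True thus ?thesis using rhs0 by (simp add: d_def Lam_def S_def)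
  next
    case False
    hence nd: "norm d > 0" by simp
    have "real n * Lam * norm d \<le> norm (g beta)"
      using key nd by (simp add: power2_eq_square mult.assoc[symmetric] )
    hence "real n * (Lam * norm d) \<le> real n * (R * (1 / real L + S))"
      using gb by (simp add: algebra_simps)
    hence "Lam * norm d \<le> R * (1 / real L + S)" using npos by simp
    hence "norm d \<le> R * (1 / real L + S) / Lam" using Lpos by (simp add: field_simps)
    thus ?thesis by (simp add: d_def Lam_def S_def)
  qed
qed

end
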